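(* Consider $n$ agents with an undirected graph $\mathcal{G}$ on $\{1,\dots,n\}$ and neighbor sets $\mathcal{N}_i$, executing a distributed algorithm of the form $$\theta(k+1)=f(\theta(k),x(k)),\qquad x(k)=g(\theta(k),\eta(k)),\qquad k\in\mathbb{Z}_{\ge0},\qquad \theta(0)=\theta_0,$$ where $f,g:\mathbb{R}^n\times\mathbb{R}^n\to\mathbb{R}^n$ are continuous, the $i$th component of $f$ depends only on $\theta_i$ and $\{x_j\}_{j\in\mathcal{N}_i\cup\{i\}}$, the $i$th component of $g$ depends only on $\theta_i$ and $\eta_i$, and $\boldsymbol{\eta}=\{\eta(k)\}_{k\ge0}$ is a random noise sequence in $\mathbb{R}^n$ with an arbitrary distribution. Then, for any $\delta>0$ and any $\epsilon>0$, it is impossible that both (i) for every initial state $\theta_0\in\mathbb{R}^n$ and every $i\in\{1,\dots,n\}$, $\theta_i(k)$ converges in distribution to $\mathrm{Ave}(\theta_0)=\frac1n\mathbf{1}_n^T\theta_0$ as $k\to\infty$, and (ii) the algorithm is $\epsilon$-differentially private (with adjacency bound $\delta$).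
   Context: For a fixed initial state $\theta_0$, the message sequence $\mathbf{x}=\{x(k)\}_{k\ge0}$ is a deterministic function of the noise sequence; denote this map $X_{\theta_0}:(\mathbb{R}^n)^{\mathbb{N}}\to(\mathbb{R}^n)^{\mathbb{N}}$, $X_{\theta_0}(\boldsymbol{\eta})=\mathbf{x}$. Two initial states $\theta_0^{(1)},\theta_0^{(2)}\in\mathbb{R}^n$ are $\delta$-adjacent if there is $i_0$ with $|\theta^{(2)}_{0,i_0}-\theta^{(1)}_{0,i_0}|\le\delta$ and $\theta^{(2)}_{0,i}=\theta^{(1)}_{0,i}$ for all $i\ne i_0$. The algorithm is $\epsilon$-differentially private if for every pair of $\delta$-adjacent initial states and every Borel set $\mathcal{O}$ of $(\mathbb{R}^n)^{\mathbb{N}}$ (product topology), $\mathbb{P}\{\boldsymbol\eta: X_{\theta_0^{(1)}}(\boldsymbol\eta)\in\mathcal{O}\}\le e^{\epsilon}\,\mathbb{P}\{\boldsymbol\eta: X_{\theta_0^{(2)}}(\boldsymbol\eta)\in\mathcal{O}\}$. *)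

theory Defs
  imports "HOL-Probability.Probability"
begin

fun traj :: "(real^'n \<Rightarrow> real^'n \<Rightarrow> real^'n) \<Rightarrow> (real^'n \<Rightarrow> real^'n \<Rightarrow> real^'n)
    \<Rightarrow> real^'n \<Rightarrow> (nat \<Rightarrow> real^'n) \<Rightarrow> nat \<Rightarrow> real^'n" where
  "traj f g \<theta>0 \<eta> 0 = \<theta>0"
| "traj f g \<theta>0 \<eta> (Suc k) = f (traj f g \<theta>0 \<eta> k) (g (traj f g \<theta>0 \<eta> k) (\<eta> k))"

definition msgs :: "(real^'n \<Rightarrow> real^'n \<Rightarrow> real^'n) \<Rightarrow> (real^'n \<Rightarrow> real^'n \<Rightarrow> real^'n)
    \<Rightarrow> real^'n \<Rightarrow> (nat \<Rightarrow> real^'n) \<Rightarrow> (nat \<Rightarrow> real^'n)" where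
  "msgs f g \<theta>0 \<eta> = (\<lambda>k. g (traj f g \<theta>0 \<eta> k) (\<eta> k))"

definition Ave :: "real^'n \<Rightarrow> real" where
  "Ave \<theta> = (\<Sum>i\<in>UNIV. \<theta> $ i) / real CARD('n)"

definition delta_adjacent :: "real \<Rightarrow> real^'n \<Rightarrow> real^'n \<Rightarrow> bool" where
  "delta_adjacent \<delta> \<theta>1 \<theta>2 \<longleftrightarrow>
     (\<exists>i0. \<bar>\<theta>2 $ i0 - \<theta>1 $ i0\<bar> \<le> \<delta> \<and> (\<forall>i. i \<noteq> i0 \<longrightarrow> \<theta>2 $ i = \<theta>1 $ i))"

definition diff_private ::
  "'w measure \<Rightarrow> ('w \<Rightarrow> nat \<Rightarrow> real^'n)
   \<Rightarrow> (real^'n \<Rightarrow> real^'n \<Rightarrow> real^'n) \<Rightarrow> (real^'n \<Rightarrow> real^'n \<Rightarrow> real^'n)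
   \<Rightarrow> real \<Rightarrow> real \<Rightarrow> bool" where
  "diff_private M \<eta> f g \<epsilon> \<delta> \<longleftrightarrow>
     (\<forall>\<theta>1 \<theta>2. delta_adjacent \<delta> \<theta>1 \<theta>2 \<longrightarrow>
       (\<forall>S \<in> sets (borel :: (nat \<Rightarrow> real^'n) measure).
          measure M {\<omega> \<in> space M. msgs f g \<theta>1 (\<eta> \<omega>) \<in> S}
            \<le> exp \<epsilon> * measure M {\<omega> \<in> space M. msgs f g \<theta>2 (\<eta> \<omega>) \<in> S}))"

end

theory Submission
  imports Defs
begin

primrec TT :: "(real^'n \<Rightarrow> real^'n \<Rightarrow> real^'n) \<Rightarrow> real^'n \<Rightarrow> nat \<Rightarrow> (nat \<Rightarrow> real^'n) \<Rightarrow> real^'n" where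
  "TT f th 0 x = th"
| "TT f th (Suc k) x = f (TT f th k x) (x k)"

lemma TT_cont:
  assumes f_cont: "continuous_on UNIV (\<lambda>(\<theta>, x). f \<theta> x)"
  shows "continuous_on UNIV (TT f th k)"
proof (induction k)
  case 0 then show ?case by (simp add: continuous_on_const)
next
  case (Suc k)
  have "continuous_on UNIV (\<lambda>x. f (TT f th k x) (x k))"
    by (rule continuous_on_compose_Pair[OF f_cont[folded UNIV_Times_UNIV] Suc continuous_on_product_coordinates]) auto
  then show ?case by simp
qed

lemma traj_cont:
  assumes f_cont: "continuous_on UNIV (\<lambda>(\<theta>, x). f \<theta> x)"
    and g_cont: "continuous_on UNIV (\<lambda>(\<theta>, e). g \<theta> e)"
  shows "continuous_on UNIV (\<lambda>e. traj f g th e k)"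
proof (induction k)
  case 0 then show ?case by (simp add: continuous_on_const)
next
  case (Suc k)
  have "continuous_on UNIV (\<lambda>e. g (traj f g th e k) (e k))"
    by (rule continuous_on_compose_Pair[OF g_cont[folded UNIV_Times_UNIV] Suc continuous_on_product_coordinates]) auto
  then have "continuous_on UNIV (\<lambda>e. f (traj f g th e k) (g (traj f g th e k) (e k)))"
    by (rule continuous_on_compose_Pair[OF f_cont[folded UNIV_Times_UNIV] Suc]) auto
  then show ?case by simp
qed

lemma traj_TT:
  assumes f_local: "\<And>i \<theta> \<theta>' x x'. \<theta> $ i = \<theta>' $ i \<Longrightarrow>
                    (\<forall>j \<in> {j. E i j} \<union> {i}. x $ j = x' $ j) \<Longrightarrow> f \<theta> x $ i = f \<theta>' x' $ i"
    and "th $ j = th1 $ j"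
  shows "traj f g th e k $ j = TT f th1 k (msgs f g th e) $ j"
proof (induction k)
  case 0 then show ?case using assms(2) by simp
next
  case (Suc k)
  show ?case
    by (simp add: msgs_def) (rule f_local, use Suc in \<open>simp_all add: msgs_def\<close>)
qed

lemma conv_point:
  assumes "weak_conv_m \<mu> (return borel (c::real))" "x \<noteq> c"
  shows "(\<lambda>k. cdf (\<mu> k) x) \<longlonglongrightarrow> (if c \<le> x then 1 else 0)"
proof -
  have rd: "real_distribution (return borel c)"
    unfolding real_distribution_def real_distribution_axioms_def
    by (simp add: prob_space_return)
  have "isCont (cdf (return borel c)) x"
    using finite_borel_measure.isCont_cdf[OF real_distribution.finite_borel_measure_M[OF rd]] assms(2) by (simp add: measure_return)
  then have "(\<lambda>k. cdf (\<mu> k) x) \<longlonglongrightarrow> cdf (return borel c) x"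
    using assms(1) unfolding weak_conv_m_def weak_conv_def by blast
  moreover have "cdf (return borel c) x = (if c \<le> x then 1 else 0)"
    by (simp add: cdf_def measure_return)
  ultimately show ?thesis by simp
qed

theorem mainTheorem1:
  fixes E :: "'n::finite \<Rightarrow> 'n \<Rightarrow> bool"
    and f g :: "real^'n \<Rightarrow> real^'n \<Rightarrow> real^'n"
    and M :: "'w measure"
    and \<eta> :: "'w \<Rightarrow> nat \<Rightarrow> real^'n"
    and \<delta> \<epsilon> :: real
  assumes n2: "CARD('n) \<ge> 2"
    and sym: "\<And>i j. E i j \<longleftrightarrow> E j i"
    and f_cont: "continuous_on UNIV (\<lambda>(\<theta>, x). f \<theta> x)"
    and g_cont: "continuous_on UNIV (\<lambda>(\<theta>, e). g \<theta> e)"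
    and f_local: "\<And>i \<theta> \<theta>' x x'. \<theta> $ i = \<theta>' $ i \<Longrightarrow>
                    (\<forall>j \<in> {j. E i j} \<union> {i}. x $ j = x' $ j) \<Longrightarrow> f \<theta> x $ i = f \<theta>' x' $ i"
    and g_local: "\<And>i \<theta> \<theta>' e e'. \<theta> $ i = \<theta>' $ i \<Longrightarrow> e $ i = e' $ i \<Longrightarrow>
                    g \<theta> e $ i = g \<theta>' e' $ i"
    and P: "prob_space M"
    and eta_rv: "\<eta> \<in> borel_measurable M"
    and \<delta>pos: "\<delta> > 0"
    and \<epsilon>pos: "\<epsilon> > 0"
  shows "\<not> ((\<forall>\<theta>0 i. weak_conv_m (\<lambda>k. distr M borel (\<lambda>\<omega>. traj f g \<theta>0 (\<eta> \<omega>) k $ i))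
                                    (return borel (Ave \<theta>0)))
            \<and> diff_private M \<eta> f g \<epsilon> \<delta>)"
proof
  assume H: "(\<forall>\<theta>0 i. weak_conv_m (\<lambda>k. distr M borel (\<lambda>\<omega>. traj f g \<theta>0 (\<eta> \<omega>) k $ i))
                                    (return borel (Ave \<theta>0)))
            \<and> diff_private M \<eta> f g \<epsilon> \<delta>"
  obtain i0 j :: 'n where ij: "i0 \<noteq> j"
  proof -
    have "\<not> card (UNIV :: 'n set) \<le> 1" using n2 by simp
    then obtain a b :: 'n where "a \<noteq> b" using card_le_Suc0_iff_eq[of "UNIV :: 'n set"] by auto
    then show ?thesis using that by blast
  qed
  define th1 :: "real^'n" where "th1 = 0"
  define th2 :: "real^'n" where "th2 = (\<chi> i. if i = i0 then \<delta> else 0)"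
  define c where "c = \<delta> / real CARD('n)"
  have cpos: "c > 0" unfolding c_def using \<delta>pos by simp
  have Ave1: "Ave th1 = 0" by (simp add: Ave_def th1_def)
  have Ave2: "Ave th2 = c" by (simp add: Ave_def th2_def c_def)
  have adj: "delta_adjacent \<delta> th1 th2"
    unfolding delta_adjacent_def th1_def th2_def using \<delta>pos by (intro exI[of _ i0]) auto
  have j12: "th2 $ j = th1 $ j" using ij by (simp add: th1_def th2_def)
  define X where "X = (\<lambda>th k \<omega>. traj f g th (\<eta> \<omega>) k $ j)"
  define \<mu> where "\<mu> = (\<lambda>th k. distr M borel (X th k))"
  interpret p: prob_space M by (rule P)
  have Xm: "X th k \<in> borel_measurable M" for th k
  proof -
    have "(\<lambda>e. traj f g th e k $ j) \<in> borel_measurable borel"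
      by (rule borel_measurable_continuous_onI)
        (rule continuous_on_compose2[of UNIV "\<lambda>v. v $ j"],
         auto intro: continuous_on_component traj_cont[OF f_cont g_cont])
    then show ?thesis unfolding X_def using eta_rv by (rule measurable_compose[rotated])
  qed
  have rd: "real_distribution (\<mu> th k)" for th k
    unfolding \<mu>_def using Xm by simp
  define U :: "real set" where "U = {..<c/2}"
  have Uo: "open U" by (simp add: U_def)
  have ineq: "measure (\<mu> th1 k) U \<le> exp \<epsilon> * measure (\<mu> th2 k) U" for k
  proof -
    define S where "S = (\<lambda>x. TT f th1 k x $ j) -` U"
    have "continuous_on UNIV (\<lambda>x. TT f th1 k x $ j)"
      by (rule continuous_on_compose2[of UNIV "\<lambda>v. v $ j"],
         auto intro: continuous_on_component TT_cont[OF f_cont])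
    then have "open S" unfolding S_def using Uo continuous_on_open_vimage[of UNIV] by auto
    then have Sb: "S \<in> sets borel" by simp
    have ev: "{\<omega> \<in> space M. msgs f g th (\<eta> \<omega>) \<in> S} = X th k -` U \<inter> space M"
      if "th $ j = th1 $ j" for th
      unfolding S_def X_def using traj_TT[OF f_local that] by auto
    have m: "measure (\<mu> th k) U = measure M {\<omega> \<in> space M. msgs f g th (\<eta> \<omega>) \<in> S}"
      if "th $ j = th1 $ j" for th
      unfolding \<mu>_def ev[OF that] using Xm Uo by (simp add: measure_distr)
    show ?thesis using H adj Sb unfolding diff_private_def m[OF refl] m[OF j12] by blast
  qed
  have l1: "(\<lambda>k. cdf (\<mu> th1 k) (c/4)) \<longlonglongrightarrow> 1"
    using conv_point[of "\<mu> th1" 0 "c/4"] conjunct1[OF H, rule_format, of th1 j] cpos Ave1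
    unfolding \<mu>_def X_def by simp
  have l2: "(\<lambda>k. cdf (\<mu> th2 k) (c/2)) \<longlonglongrightarrow> 0"
    using conv_point[of "\<mu> th2" c "c/2"] conjunct1[OF H, rule_format, of th2 j] cpos Ave2
    unfolding \<mu>_def X_def by simp
  have b: "cdf (\<mu> th1 k) (c/4) \<le> exp \<epsilon> * cdf (\<mu> th2 k) (c/2)" for k
  proof -
    interpret r1: real_distribution "\<mu> th1 k" by (rule rd)
    interpret r2: real_distribution "\<mu> th2 k" by (rule rd)
    have "cdf (\<mu> th1 k) (c/4) \<le> measure (\<mu> th1 k) U"
      unfolding cdf_def U_def using cpos by (intro r1.finite_measure_mono) auto
    also have "\<dots> \<le> exp \<epsilon> * measure (\<mu> th2 k) U" by (rule ineq)
    also have "\<dots> \<le> exp \<epsilon> * cdf (\<mu> th2 k) (c/2)"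
      unfolding cdf_def U_def by (intro mult_left_mono r2.finite_measure_mono) auto
    finally show ?thesis .
  qed
  have "(\<lambda>k. exp \<epsilon> * cdf (\<mu> th2 k) (c/2)) \<longlonglongrightarrow> exp \<epsilon> * 0"
    by (intro tendsto_mult_left l2)
  then have "1 \<le> exp \<epsilon> * (0::real)"
    by (rule LIMSEQ_le[OF l1]) (use b in blast)
  then show False by simp
qed

end
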